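(* Let $s\in\mathbb C$ with $\mathrm{Re}\,s>-2$. Then: (1) for every prime $p\ne3$, $$\sum_{k=0}^{\infty}\frac{T(p^k)}{p^{ks}}=\frac{1}{1-p^{-(3s+6)}}\Big(1+\frac{1}{p^{s+7}}\sum_{c=1}^{p-1}|S(p,c)|^6+\frac{p-1}{p^{2s+7}}-\frac{1}{p^{3s+7}}\Big);$$ (2) $$\sum_{k=0}^{\infty}\frac{T(3^k)}{3^{ks}}=\frac{1}{1-3^{-(3s+6)}}\Big(1+\frac{1}{3^{2s+14}}\sum_{\substack{c=1\\(c,3)=1}}^{9}|S(9,c)|^6-\frac{1}{3^{3s+7}}\Big),$$ the series converging absolutely.
   Context: Write $e(\alpha)=e^{2\pi i\alpha}$. For integers $q\ge1$ and $c$, $S(q,c)=\sum_{m=1}^{q}e(cm^3/q)$, and $T(q)=q^{-7}\sum_{1\le c\le q,(c,q)=1}|S(q,c)|^6$. *)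

theory Defs
  imports "HOL-Analysis.Analysis" "HOL-Computational_Algebra.Primes"
begin

definition e :: "real \<Rightarrow> complex" where
  "e \<alpha> = exp (2 * of_real pi * \<i> * of_real \<alpha>)"

definition S :: "nat \<Rightarrow> int \<Rightarrow> complex" where
  "S q c = (\<Sum>m = 1..q. e (of_int c * (of_nat m) ^ 3 / of_nat q))"

definition T :: "nat \<Rightarrow> real" where
  "T q = (of_nat q) powi (-7) *
     (\<Sum>c \<in> {c. 1 \<le> c \<and> c \<le> int q \<and> coprime c (int q)}. (cmod (S q c)) ^ 6)"

end

theory Submission imports Defs begin

lemma e_add: "e (a + b) = e a * e b"
  unfolding e_def by (simp add: distrib_left exp_add)

lemma e_int: "e (of_int k) = 1"
proof -
  have "2 * of_real pi * \<i> * of_real (of_int k) = \<i> * (of_int k * (of_real pi * 2))"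
    by (simp add: mult_ac)
  then show ?thesis unfolding e_def by (simp only: exp_2pi_1_int)
qed

lemma norm_e: "norm (e a) = 1"
  unfolding e_def by (simp add: norm_exp_eq_Re)

lemma e_nat_mult: "e (of_nat n * a) = e a ^ n"
proof -
  have "e (of_nat n * a) = exp (of_nat n * (2 * of_real pi * \<i> * of_real a))"
    unfolding e_def by (simp add: mult_ac)
  also have "\<dots> = e a ^ n" unfolding e_def by (rule exp_of_nat_mult)
  finally show ?thesis .
qed

lemma e_eq_1: "e a = 1 \<Longrightarrow> a \<in> \<int>"
proof -
  assume "e a = 1"
  then obtain n :: int where "2 * pi * a = of_int (2*n) * pi"
    unfolding e_def exp_eq_1 by auto
  then have "a = of_int n" by simp
  then show ?thesis by simp
qed

definition E :: "nat \<Rightarrow> int \<Rightarrow> complex" where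
  "E q t = e (of_int t / of_nat q)"

lemma E_add: "E q (a + b) = E q a * E q b"
  unfolding E_def by (simp add: add_divide_distrib e_add)

lemma E_per: "q > 0 \<Longrightarrow> E q (t + int q * k) = E q t"
proof -
  assume q: "q > 0"
  have "E q (t + int q * k) = E q t * e (of_int k)"
    unfolding E_def using q by (simp add: add_divide_distrib e_add)
  then show ?thesis by (simp add: e_int)
qed

lemma E_cong: "q > 0 \<Longrightarrow> int q dvd (t - u) \<Longrightarrow> E q t = E q u"
  by (metis E_per dvd_def add_diff_cancel_left' diff_add_cancel)

lemma E_cancel: "p > 0 \<Longrightarrow> E (p * q) (int p * t) = E q t"
  unfolding E_def by simp

lemma E_zero: "E q 0 = 1" unfolding E_def e_def by simp

lemma norm_E: "norm (E q t) = 1" unfolding E_def by (rule norm_e)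

lemma E_dvd: "q > 0 \<Longrightarrow> int q dvd t \<Longrightarrow> E q t = 1"
  using E_cong[of q t 0] by (simp add: E_zero)

lemma E_nat_mult: "E q (a * int y) = E q a ^ y"
  unfolding E_def using e_nat_mult[of y "of_int a / of_nat q"] by (simp add: mult_ac)

lemma charsum:
  assumes N: "N > 0"
  shows "(\<Sum>y<N. E N (a * int y)) = (if int N dvd a then of_nat N else 0)"
proof (cases "int N dvd a")
  case True
  then have "\<And>y. E N (a * int y) = 1" using N by (intro E_dvd) auto
  then show ?thesis using True by simp
next
  case False
  have z1: "E N a \<noteq> 1"
  proof
    assume "E N a = 1"
    then have "of_int a / of_nat N \<in> (\<int> :: real set)" unfolding E_def by (rule e_eq_1)
    then obtain k where "of_int a / of_nat N = (of_int k :: real)" by (auto elim: Ints_cases)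
    then have "of_int a = (of_int (int N * k) :: real)" using N by (simp add: field_simps)
    then have "a = int N * k" by linarith
    then show False using False by simp
  qed
  have zN: "E N a ^ N = 1" using E_nat_mult[of N a N] N by (simp add: E_dvd)
  have "(\<Sum>y<N. E N (a * int y)) = (\<Sum>y<N. E N a ^ y)" by (simp add: E_nat_mult)
  also have "\<dots> = 0" using z1 zN by (simp add: sum_gp_strict)
  finally show ?thesis using False by simp
qed


lemma decomp:
  fixes f :: "nat \<Rightarrow> 'a::comm_monoid_add"
  assumes A: "A > 0"
  shows "(\<Sum>m<A*B. f m) = (\<Sum>x<A. \<Sum>y<B. f (x + A*y))"
proof -
  have bij: "bij_betw (\<lambda>(x,y). x + A*y) ({..<A} \<times> {..<B}) {..<A*B}"
  proof (rule bij_betwI[where g="\<lambda>m. (m mod A, m div A)"])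
    show "(\<lambda>(x, y). x + A * y) \<in> {..<A} \<times> {..<B} \<rightarrow> {..<A * B}"
    proof
      fix z assume "z \<in> {..<A} \<times> {..<B}"
      then obtain x y where z: "z = (x,y)" "x < A" "y < B" by auto
      have "x + A*y < A + A*y" using z by simp
      also have "\<dots> = A * (Suc y)" by simp
      also have "\<dots> \<le> A * B" using z by (intro mult_le_mono2) simp
      finally show "(\<lambda>(x, y). x + A * y) z \<in> {..<A * B}" using z by simp
    qed
    show "(\<lambda>m. (m mod A, m div A)) \<in> {..<A * B} \<rightarrow> {..<A} \<times> {..<B}"
      using A by (auto simp: less_mult_imp_div_less mult.commute)
    show "(case (m mod A, m div A) of (x, y) \<Rightarrow> x + A * y) = m" for m
      by simp
    show "(\<lambda>m. (m mod A, m div A)) (case z of (x, y) \<Rightarrow> x + A * y) = z"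
      if "z \<in> {..<A} \<times> {..<B}" for z
      using that A by auto
  qed
  have "(\<Sum>m<A*B. f m) = (\<Sum>z\<in>{..<A} \<times> {..<B}. f ((\<lambda>(x,y). x + A*y) z))"
    using sum.reindex_bij_betw[OF bij, of f] by simp
  also have "\<dots> = (\<Sum>x<A. \<Sum>y<B. f (x + A*y))"
    by (simp add: sum.cartesian_product split_def)
  finally show ?thesis .
qed


lemma S_alt:
  assumes q: "q > 0"
  shows "S q c = (\<Sum>m<q. E q (c * int m ^ 3))"
proof -
  have g: "\<And>m. e (of_int c * (of_nat m) ^ 3 / of_nat q) = E q (c * int m ^ 3)"
    unfolding E_def by simp
  have "S q c = (\<Sum>m\<in>{1..q}. E q (c * int m ^ 3))" unfolding S_def g ..
  also have "{1..q} = insert q {1..<q}" using q by auto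
  also have "(\<Sum>m\<in>insert q {1..<q}. E q (c * int m ^ 3)) = E q (c * int q ^ 3) + (\<Sum>m\<in>{1..<q}. E q (c * int m ^ 3))"
    by (subst sum.insert) auto
  also have "E q (c * int q ^ 3) = E q (c * int 0 ^ 3)"
    using q by (intro E_cong) (auto simp: power3_eq_cube)
  also have "E q (c * int 0 ^ 3) + (\<Sum>m\<in>{1..<q}. E q (c * int m ^ 3)) = (\<Sum>m\<in>insert 0 {1..<q}. E q (c * int m ^ 3))"
    by (subst sum.insert) auto
  also have "insert 0 {1..<q} = {..<q}" using q by auto
  finally show ?thesis .
qed

lemma S_period:
  assumes q: "q > 0"
  shows "(\<Sum>m<q * B. E q (c * int m ^ 3)) = of_nat B * S q c"
proof -
  have "(\<Sum>m<q * B. E q (c * int m ^ 3)) = (\<Sum>x<q. \<Sum>y<B. E q (c * int (x + q*y) ^ 3))"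
    by (rule decomp[OF q])
  also have "\<dots> = (\<Sum>x<q. \<Sum>y<B. E q (c * int x ^ 3))"
  proof (intro sum.cong refl E_cong[OF q])
    fix x y
    have "c * int (x + q*y) ^ 3 - c * int x ^ 3 = int q * (c * (3 * int x^2 * int y + 3 * int x * int q * int y^2 + int q^2 * int y^3))"
      by (simp add: algebra_simps power2_eq_square power3_eq_cube)
    then show "int q dvd c * int (x + q*y) ^ 3 - c * int x ^ 3" by simp
  qed
  also have "\<dots> = of_nat B * S q c" using S_alt[OF q] by (simp add: sum_distrib_left)
  finally show ?thesis .
qed

lemma S_reduce_gen:
  fixes p n j :: nat and c :: int
  assumes p: "prime p" and j: "j \<ge> 1" and n: "n \<ge> j + 1"
    and H1: "int p ^ n dvd 3 * int p ^ (2*(n-j))"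
    and H2: "int p ^ n dvd int p ^ (3*(n-j))"
    and H3: "\<And>x::int. (int p ^ j dvd 3*c*x^2) \<longleftrightarrow> int p dvd x"
  shows "S (p^n) c = of_nat (p^j) * (\<Sum>z<p^(n-j-1). E (p^n) (c * (int p * int z)^3))"
proof -
  have p0: "p > 0" using p prime_gt_0_nat by blast
  define L where "L = p^(n-j)"
  have L0: "L > 0" unfolding L_def using p0 by simp
  have pn: "p^n = L * p^j" unfolding L_def using n by (simp flip: power_add)
  have pn0: "p^n > 0" using p0 by simp
  have pj0: "p^j > 0" using p0 by simp
  have inner: "E (p^n) (c * int (x + L*y)^3) = E (p^n) (c * int x ^ 3) * E (p^j) (3*c*int x^2 * int y)" for x y
  proof -
    have L2: "int L ^ 2 = int p ^ (2*(n-j))" unfolding L_def by (simp add: power_mult_distrib mult.commute flip: power_mult)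
    have L3: "int L ^ 3 = int p ^ (3*(n-j))" unfolding L_def by (simp add: power_mult_distrib mult.commute flip: power_mult)
    have d1: "int (p^n) dvd 3 * int L ^ 2" using H1 L2 by simp
    have d2: "int (p^n) dvd int L ^ 3" using H2 L3 by simp
    have eq: "c * int (x + L*y)^3 - (c * int x ^ 3 + int L * (3*c*int x^2 * int y)) = (c * int x * int y^2 * (3 * int L ^ 2) + c * int y ^3 * int L^3)"
      by (simp add: algebra_simps power2_eq_square power3_eq_cube)
    have dd: "int (p^n) dvd (c * int x * int y^2 * (3 * int L ^ 2) + c * int y ^3 * int L^3)"
      by (intro dvd_add dvd_mult[OF d1] dvd_mult[OF d2])
    have "E (p^n) (c * int (x + L*y)^3) = E (p^n) (c * int x ^ 3 + int L * (3*c*int x^2 * int y))"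
      apply (rule E_cong[OF pn0]) apply (subst eq) apply (rule dd) done
    also have "\<dots> = E (p^n) (c * int x ^ 3) * E (p^n) (int L * (3*c*int x^2 * int y))"
      by (rule E_add)
    also have "E (p^n) (int L * (3*c*int x^2 * int y)) = E (p^j) (3*c*int x^2 * int y)"
      unfolding pn by (rule E_cancel[OF L0])
    finally show ?thesis .
  qed
  have "S (p^n) c = (\<Sum>m<L * p^j. E (p^n) (c * int m ^ 3))"
    using S_alt[OF pn0] pn by simp
  also have "\<dots> = (\<Sum>x<L. \<Sum>y<p^j. E (p^n) (c * int (x + L*y)^3))"
    by (rule decomp[OF L0])
  also have "\<dots> = (\<Sum>x<L. E (p^n) (c * int x ^ 3) * (\<Sum>y<p^j. E (p^j) (3*c*int x^2 * int y)))"
    by (simp only: inner sum_distrib_left)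
  also have "\<dots> = (\<Sum>x<L. of_nat (p^j) * (if p dvd x then E (p^n) (c * int x ^ 3) else 0))"
  proof (intro sum.cong refl)
    fix x
    have "int (p^j) dvd 3*c*int x^2 \<longleftrightarrow> p dvd x" using H3[of "int x"] by simp
    then show "E (p^n) (c * int x ^ 3) * (\<Sum>y<p^j. E (p^j) (3*c*int x^2 * int y)) =
          of_nat (p^j) * (if p dvd x then E (p^n) (c * int x ^ 3) else 0)"
      by (simp add: charsum[OF pj0])
  qed
  also have "\<dots> = of_nat (p^j) * (\<Sum>x<p * p^(n-j-1). (if p dvd x then E (p^n) (c * int x ^ 3) else 0))"
  proof -
    have "n - j = Suc (n-j-1)" using n by simp
    then have "L = p * p^(n-j-1)" unfolding L_def by (metis power_Suc)
    then show ?thesis by (simp add: sum_distrib_left)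
  qed
  also have "(\<Sum>x<p * p^(n-j-1). (if p dvd x then E (p^n) (c * int x ^ 3) else 0)) =
      (\<Sum>w<p. \<Sum>z<p^(n-j-1). (if p dvd (w + p*z) then E (p^n) (c * int (w + p*z) ^ 3) else 0))"
    by (rule decomp[OF p0])
  also have "\<dots> = (\<Sum>w<p. if w = 0 then (\<Sum>z<p^(n-j-1). E (p^n) (c * (int p * int z) ^ 3)) else 0)"
  proof (intro sum.cong refl)
    fix w assume w: "w \<in> {..<p}"
    show "(\<Sum>z<p^(n-j-1). (if p dvd (w + p*z) then E (p^n) (c * int (w + p*z) ^ 3) else 0)) =
        (if w = 0 then (\<Sum>z<p^(n-j-1). E (p^n) (c * (int p * int z) ^ 3)) else 0)"
    proof (cases "w = 0")
      case True then show ?thesis by simp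
    next
      case False
      have "\<not> p dvd (w + p*z)" for z
      proof
        assume "p dvd (w + p*z)"
        then have "p dvd w" by (simp add: dvd_add_left_iff)
        then show False using w False by (auto dest: dvd_imp_le)
      qed
      then show ?thesis using False by simp
    qed
  qed
  also have "\<dots> = (\<Sum>z<p^(n-j-1). E (p^n) (c * (int p * int z) ^ 3))"
    using p0 by (simp add: sum.delta')
  finally show ?thesis .
qed


lemma S_reduce_gen2:
  fixes p n j :: nat and c :: int
  assumes p: "prime p" and j: "j \<ge> 1" "j \<le> 2" and n: "n \<ge> 3"
    and H1: "int p ^ n dvd 3 * int p ^ (2*(n-j))"
    and H2: "int p ^ n dvd int p ^ (3*(n-j))"
    and H3: "\<And>x::int. (int p ^ j dvd 3*c*x^2) \<longleftrightarrow> int p dvd x"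
  shows "S (p^n) c = of_nat (p^2) * S (p^(n-3)) c"
proof -
  have p0: "p > 0" using p prime_gt_0_nat by blast
  have q0: "p^(n-3) > 0" using p0 by simp
  have pn: "p^n = p^3 * p^(n-3)" using n by (simp flip: power_add)
  have e1: "E (p^n) (c * (int p * int z)^3) = E (p^(n-3)) (c * int z ^ 3)" for z
  proof -
    have eq: "c * (int p * int z)^3 = int (p^3) * (c * int z ^ 3)" by (simp add: algebra_simps power_mult_distrib)
    have "E (p^3 * p^(n-3)) (int (p^3) * (c * int z ^ 3)) = E (p^(n-3)) (c*int z^3)"
      by (rule E_cancel) (use p0 in simp)
    then show ?thesis unfolding pn eq .
  qed
  have "n-j-1 = (n-3) + (2-j)" using n j by simp
  then have ex: "p^(n-j-1) = p^(n-3) * p^(2-j)" by (simp add: power_add)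
  have "S (p^n) c = of_nat (p^j) * (\<Sum>z<p^(n-j-1). E (p^n) (c * (int p * int z)^3))"
    using S_reduce_gen[OF p j(1) _ H1 H2 H3] n j by simp
  also have "\<dots> = of_nat (p^j) * (\<Sum>z<p^(n-3) * p^(2-j). E (p^(n-3)) (c * int z ^ 3))"
    by (simp only: e1 ex)
  also have "\<dots> = of_nat (p^j) * (of_nat (p^(2-j)) * S (p^(n-3)) c)"
    by (simp only: S_period[OF q0])
  also have "\<dots> = of_nat (p^j * p^(2-j)) * S (p^(n-3)) c" by simp
  also have "p^j * p^(2-j) = p^2" using j by (simp flip: power_add)
  finally show ?thesis .
qed

lemma int_prime_dvd3:
  assumes p: "prime p" "p \<noteq> 3"
  shows "\<not> int p dvd 3"
proof
  assume "int p dvd 3"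
  then have "p dvd 3" by presburger
  moreover have "prime (3::nat)" by simp
  ultimately have "p = 1 \<or> p = 3" using prime_nat_iff by blast
  then show False using p by auto
qed

lemma H3_gen:
  assumes p: "prime p" "p \<noteq> 3" and c: "\<not> int p dvd c"
  shows "(int p ^ 1 dvd 3*c*x^2) \<longleftrightarrow> int p dvd x"
proof -
  have pi: "prime (int p)" using p by simp
  show ?thesis using pi int_prime_dvd3[OF p] c
    by (auto simp: prime_dvd_mult_iff prime_dvd_power_iff)
qed

lemma H3_three:
  assumes c: "\<not> 3 dvd c"
  shows "((int 3) ^ 2 dvd 3*c*x^2) \<longleftrightarrow> int 3 dvd x"
proof -
  have pi: "prime (3::int)" by simp
  have "((3::int) ^ 2 dvd 3*c*x^2) \<longleftrightarrow> 3*3 dvd 3*(c*x^2)" by (simp add: power2_eq_square mult.assoc)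
  also have "\<dots> \<longleftrightarrow> 3 dvd c*x^2" by (rule dvd_times_left_cancel_iff) simp
  also have "\<dots> \<longleftrightarrow> 3 dvd x" using pi c by (simp add: prime_dvd_mult_iff prime_dvd_power_iff)
  finally show ?thesis by simp
qed

lemma S_red_p:
  assumes p: "prime p" "p \<noteq> 3" and c: "\<not> int p dvd c" and n: "n \<ge> 3"
  shows "S (p^n) c = of_nat (p^2) * S (p^(n-3)) c"
proof (rule S_reduce_gen2[OF p(1) _ _ n, of 1])
  show "int p ^ n dvd 3 * int p ^ (2*(n-1))"
    using n by (intro dvd_mult le_imp_power_dvd) simp
  show "int p ^ n dvd int p ^ (3*(n-1))"
    using n by (intro le_imp_power_dvd) simp
qed (use H3_gen[OF p c] in auto)

lemma S_p2:
  assumes p: "prime p" "p \<noteq> 3" and c: "\<not> int p dvd c"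
  shows "S (p^2) c = of_nat p"
proof -
  have "S (p^2) c = of_nat (p^1) * (\<Sum>z<p^(2-1-1). E (p^2) (c * (int p * int z)^3))"
  proof (rule S_reduce_gen[OF p(1)])
    show "int p ^ 2 dvd 3 * int p ^ (2*(2-1))" by simp
    show "int p ^ 2 dvd int p ^ (3*(2-1))" by (intro le_imp_power_dvd) simp
  qed (use H3_gen[OF p c] in auto)
  then show ?thesis by (simp add: E_zero)
qed

lemma S_red_3:
  assumes c: "\<not> 3 dvd c" and n: "n \<ge> 3"
  shows "S (3^n) c = 9 * S (3^(n-3)) c"
proof -
  have "S (3^n) c = of_nat (3^2) * S (3^(n-3)) c"
  proof (rule S_reduce_gen2[of 3 2 n c])
    show "int 3 ^ n dvd 3 * int 3 ^ (2*(n-2))"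
    proof -
      have "3 * (3::int) ^ (2*(n-2)) = 3 ^ (Suc (2*(n-2)))" by simp
      moreover have "(3::int)^n dvd 3 ^ (Suc (2*(n-2)))" using n by (intro le_imp_power_dvd) simp
      ultimately show ?thesis by simp
    qed
    show "int 3 ^ n dvd int 3 ^ (3*(n-2))" using n by (intro le_imp_power_dvd) simp
  qed (use n H3_three[OF c] in auto)
  then show ?thesis by simp
qed

lemma S_one: "S 1 c = 1"
  unfolding S_def using e_int[of c] by simp

lemma S_3: assumes c: "\<not> 3 dvd c" shows "S 3 c = 0"
proof -
  have "S 3 c = (\<Sum>m<3. E 3 (c * int m ^ 3))" by (rule S_alt) simp
  also have "\<dots> = (\<Sum>m<3. E 3 (c * int m))"
  proof (intro sum.cong refl E_cong)
    fix m :: nat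
    have "int m ^ 3 - int m = int m * (int m - 1) * (int m + 1)" by (simp add: algebra_simps power3_eq_cube)
    moreover have "(3::int) dvd int m * (int m - 1) * (int m + 1)"
    proof -
      define q r where "q = int m div 3" and "r = int m mod 3"
      have m: "int m = 3*q + r" unfolding q_def r_def by simp
      have r: "r = 0 \<or> r = 1 \<or> r = 2" unfolding r_def by auto
      have "int m * (int m - 1) * (int m + 1) = 3 * (9*q^3 + 9*q^2*r + 3*q*r^2 - q) + (r^3 - r)"
        unfolding m by (simp add: algebra_simps power2_eq_square power3_eq_cube)
      moreover have "(3::int) dvd (r^3 - r)" using r by auto
      ultimately show ?thesis by simp
    qed
    ultimately have "(3::int) dvd c * int m ^ 3 - c * int m"
      by (metis dvd_mult right_diff_distrib)
    then show "int 3 dvd c * int m ^ 3 - c * int m" by simp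
  qed simp
  also have "\<dots> = 0" using charsum[of 3 c] c by simp
  finally show ?thesis .
qed


lemma T_alt: "T q = (\<Sum>c \<in> {c. 1 \<le> c \<and> c \<le> int q \<and> coprime c (int q)}. (cmod (S q c)) ^ 6) / real q ^ 7"
  unfolding T_def by (simp add: power_int_minus field_simps)

lemma S_red_any:
  assumes p: "prime p" and c: "\<not> int p dvd c" and n: "n \<ge> 3"
  shows "S (p^n) c = of_nat (p^2) * S (p^(n-3)) c"
proof (cases "p = 3")
  case True
  then show ?thesis using S_red_3[of c n] c n by simp
next
  case False
  then show ?thesis using S_red_p[OF p False c n] by simp
qed

lemma S_cper: assumes q: "q > 0" shows "S q (c + int q * k) = S q c"
proof -
  have "S q (c + int q * k) = (\<Sum>m<q. E q ((c + int q * k) * int m ^ 3))" by (rule S_alt[OF q])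
  also have "\<dots> = (\<Sum>m<q. E q (c * int m ^ 3))"
  proof (intro sum.cong refl E_cong[OF q])
    fix m
    have "(c + int q * k) * int m ^ 3 - c * int m ^ 3 = int q * (k * int m ^ 3)" by (simp add: algebra_simps)
    then show "int q dvd (c + int q * k) * int m ^ 3 - c * int m ^ 3" by simp
  qed
  also have "\<dots> = S q c" by (rule S_alt[OF q, symmetric])
  finally show ?thesis .
qed

lemma Cset:
  assumes p: "prime p" and n: "n \<ge> 1"
  shows "{c. 1 \<le> c \<and> c \<le> int (p^n) \<and> coprime c (int (p^n))} = int ` {c \<in> {..<p^n}. \<not> p dvd c}"
proof -
  have pi: "prime (int p)" using p by simp
  have cop: "coprime c (int (p^n)) \<longleftrightarrow> \<not> int p dvd c" for c
  proof -
    have "coprime c (int (p^n)) \<longleftrightarrow> coprime c (int p ^ n)" by (simp only: of_nat_power)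
    also have "\<dots> \<longleftrightarrow> coprime c (int p)" using n by (simp only: coprime_power_right_iff) simp
    also have "\<dots> \<longleftrightarrow> \<not> int p dvd c"
    proof
      assume "coprime c (int p)"
      then show "\<not> int p dvd c" using coprime_common_divisor[of c "int p" "int p"] not_prime_unit[of "int p"] pi dvd_refl[of "int p"]
        by blast
    next
      assume "\<not> int p dvd c"
      then show "coprime c (int p)" using prime_imp_coprime[OF pi, of c] coprime_commute[of c "int p"] by blast
    qed
    finally show ?thesis .
  qed
  show ?thesis
  proof (intro set_eqI iffI)
    fix c assume "c \<in> {c. 1 \<le> c \<and> c \<le> int (p^n) \<and> coprime c (int (p^n))}"
    then have c: "1 \<le> c" "c \<le> int (p^n)" "\<not> int p dvd c" using cop by blast+
    have "int p dvd int p ^ n" using n by (intro dvd_power) auto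
    then have "c \<noteq> int (p^n)" using c(3) by auto
    then have lt: "nat c < p^n" using c by linarith
    have nd: "\<not> p dvd nat c"
    proof
      assume "p dvd nat c"
      then have "int p dvd int (nat c)" by (simp only: int_dvd_int_iff)
      then show False using c by simp
    qed
    have "c = int (nat c)" using c by simp
    moreover have "nat c \<in> {c \<in> {..<p^n}. \<not> p dvd c}" using lt nd by blast
    ultimately show "c \<in> int ` {c \<in> {..<p^n}. \<not> p dvd c}" by (rule image_eqI)
  next
    fix c assume "c \<in> int ` {c \<in> {..<p^n}. \<not> p dvd c}"
    then obtain m where m: "c = int m" "m < p^n" "\<not> p dvd m" by blast
    have "m \<noteq> 0" using m(3) by (rule contrapos_nn) simp
    then have "1 \<le> c" "c \<le> int (p^n)" using m by linarith+
    moreover have "\<not> int p dvd c" using m(1,3) by simp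
    ultimately show "c \<in> {c. 1 \<le> c \<and> c \<le> int (p^n) \<and> coprime c (int (p^n))}" using cop by blast
  qed
qed

lemma sum_C:
  assumes p: "prime p" and n: "n \<ge> 1"
  shows "(\<Sum>c \<in> {c. 1 \<le> c \<and> c \<le> int (p^n) \<and> coprime c (int (p^n))}. g c) =
         (\<Sum>m<p^n. if p dvd m then 0 else g (int m))"
proof -
  have "(\<Sum>c \<in> {c. 1 \<le> c \<and> c \<le> int (p^n) \<and> coprime c (int (p^n))}. g c) =
        (\<Sum>m \<in> {c \<in> {..<p^n}. \<not> p dvd c}. g (int m))"
    unfolding Cset[OF p n] by (subst sum.reindex) (auto simp: inj_on_def)
  also have "\<dots> = (\<Sum>m<p^n. if \<not> p dvd m then g (int m) else 0)"
    by (rule sum.inter_filter) simp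
  also have "\<dots> = (\<Sum>m<p^n. if p dvd m then 0 else g (int m))"
    by (intro sum.cong) auto
  finally show ?thesis .
qed

lemma sum_C_period:
  assumes p: "prime p" and n: "n \<ge> 1" and per: "\<And>x y. g (int (x + p^n * y)) = g (int x)"
  shows "(\<Sum>m<p^n * B. if p dvd m then 0 else g (int m)) = of_nat B * (\<Sum>m<p^n. if p dvd m then 0 else g (int m))"
proof -
  have p0: "p^n > 0" using p prime_gt_0_nat by simp
  have dv: "p dvd (x + p^n * y) \<longleftrightarrow> p dvd x" for x y
    using n by (simp add: dvd_add_left_iff dvd_mult2 dvd_power[of n p])
  have "(\<Sum>m<p^n * B. if p dvd m then 0 else g (int m)) = (\<Sum>x<p^n. \<Sum>y<B. if p dvd (x + p^n*y) then 0 else g (int (x + p^n*y)))"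
    by (rule decomp[OF p0])
  also have "\<dots> = (\<Sum>x<p^n. \<Sum>y<B. if p dvd x then 0 else g (int x))"
    by (simp only: dv per)
  also have "\<dots> = of_nat B * (\<Sum>m<p^n. if p dvd m then 0 else g (int m))"
    by (simp add: sum_distrib_left)
  finally show ?thesis .
qed

lemma count_C:
  assumes p: "prime p" and n: "n \<ge> 1"
  shows "(\<Sum>m<p^n. if p dvd m then 0 else (1::real)) = real (p^(n-1)) * (real p - 1)"
proof -
  have p0: "p > 0" using p prime_gt_0_nat by simp
  have pn: "p^n = p * p^(n-1)" using n by (metis Suc_diff_1 less_le_trans power_Suc zero_less_one)
  have "(\<Sum>m<p^n. if p dvd m then 0 else (1::real)) = (\<Sum>w<p. \<Sum>z<p^(n-1). if p dvd (w + p*z) then 0 else (1::real))"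
    unfolding pn by (rule decomp[OF p0])
  also have "\<dots> = (\<Sum>w<p. if w = 0 then 0 else real (p^(n-1)))"
  proof (intro sum.cong refl)
    fix w assume w: "w \<in> {..<p}"
    have "p dvd (w + p*z) \<longleftrightarrow> w = 0" for z
    proof
      assume "p dvd (w + p*z)"
      then have "p dvd w" by (simp add: dvd_add_left_iff)
      then show "w = 0" using w by (auto dest: dvd_imp_le)
    qed simp
    then show "(\<Sum>z<p^(n-1). if p dvd (w + p*z) then 0 else (1::real)) = (if w = 0 then 0 else real (p^(n-1)))"
      by simp
  qed
  also have "\<dots> = (\<Sum>w\<in>{..<p} - {0}. real (p^(n-1)))"
    by (simp add: sum.If_cases Diff_eq Compl_eq)
  also have "\<dots> = real (p^(n-1)) * (real p - 1)" using p0 by (simp add: of_nat_diff)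
  finally show ?thesis .
qed


lemma S_one': "S (Suc 0) c = 1" using S_one by simp

lemma T_rec:
  assumes p: "prime p" and n: "n \<ge> 1"
  shows "T (p^(n+3)) = T (p^n) / real p ^ 6"
proof -
  have p0: "p > 0" using p prime_gt_0_nat by simp
  have n3: "n + 3 \<ge> 1" by simp
  define g where "g = (\<lambda>c. (cmod (S (p^n) c)) ^ 6)"
  have red: "\<not> int p dvd c \<Longrightarrow> (cmod (S (p^(n+3)) c)) ^ 6 = real p ^ 12 * g c" for c
  proof -
    assume c: "\<not> int p dvd c"
    have "S (p^(n+3)) c = of_nat (p^2) * S (p^n) c" using S_red_any[OF p c, of "n+3"] by simp
    then have "cmod (S (p^(n+3)) c) = real p ^ 2 * cmod (S (p^n) c)" by (simp add: norm_mult norm_power)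
    then show ?thesis unfolding g_def by (simp add: power_mult_distrib flip: power_mult)
  qed
  have per: "g (int (x + p^n * y)) = g (int x)" for x y
  proof -
    have "int (x + p^n * y) = int x + int (p^n) * int y" by simp
    then show ?thesis unfolding g_def using S_cper[of "p^n" "int x" "int y"] p0 by simp
  qed
  have "(\<Sum>c \<in> {c. 1 \<le> c \<and> c \<le> int (p^(n+3)) \<and> coprime c (int (p^(n+3)))}. (cmod (S (p^(n+3)) c)) ^ 6)
      = (\<Sum>m<p^(n+3). if p dvd m then 0 else (cmod (S (p^(n+3)) (int m))) ^ 6)"
    by (rule sum_C[OF p n3])
  also have "\<dots> = (\<Sum>m<p^(n+3). if p dvd m then 0 else real p ^ 12 * g (int m))"
    by (intro sum.cong) (auto simp: red)
  also have "\<dots> = (\<Sum>m<p^n * p^3. if p dvd m then 0 else real p ^ 12 * g (int m))"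
    by (simp only: power_add)
  also have "\<dots> = real p ^ 12 * (\<Sum>m<p^n * p^3. if p dvd m then 0 else g (int m))"
    by (subst sum_distrib_left) (intro sum.cong, auto)
  also have "(\<Sum>m<p^n * p^3. if p dvd m then 0 else g (int m)) = of_nat (p^3) * (\<Sum>m<p^n. if p dvd m then 0 else g (int m))"
    by (rule sum_C_period[OF p n per])
  also have "(\<Sum>m<p^n. if p dvd m then 0 else g (int m)) = (\<Sum>c \<in> {c. 1 \<le> c \<and> c \<le> int (p^n) \<and> coprime c (int (p^n))}. g c)"
    by (rule sum_C[OF p n, symmetric])
  finally have eq: "(\<Sum>c \<in> {c. 1 \<le> c \<and> c \<le> int (p^(n+3)) \<and> coprime c (int (p^(n+3)))}. (cmod (S (p^(n+3)) c)) ^ 6)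
      = real p ^ 15 * (\<Sum>c \<in> {c. 1 \<le> c \<and> c \<le> int (p^n) \<and> coprime c (int (p^n))}. g c)"
    by simp
  show ?thesis
    unfolding T_alt eq unfolding g_def using p0
    by (simp add: field_simps power_add flip: power_mult)
qed

lemma T_p3:
  assumes p: "prime p"
  shows "T (p^3) = (real p - 1) / real p ^ 7"
proof -
  have p0: "p > 0" using p prime_gt_0_nat by simp
  have red: "\<not> int p dvd c \<Longrightarrow> (cmod (S (p^3) c)) ^ 6 = real p ^ 12" for c
  proof -
    assume c: "\<not> int p dvd c"
    have "S (p^3) c = of_nat (p^2)" using S_red_any[OF p c, of 3] by (simp add: S_one')
    then show ?thesis by (simp add: norm_power flip: power_mult)
  qed
  have "(\<Sum>c \<in> {c. 1 \<le> c \<and> c \<le> int (p^3) \<and> coprime c (int (p^3))}. (cmod (S (p^3) c)) ^ 6)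
      = (\<Sum>m<p^3. if p dvd m then 0 else (cmod (S (p^3) (int m))) ^ 6)"
    by (rule sum_C[OF p]) simp
  also have "\<dots> = (\<Sum>m<p^3. if p dvd m then 0 else real p ^ 12 * 1)"
    by (intro sum.cong) (auto simp: red)
  also have "\<dots> = real p ^ 12 * (\<Sum>m<p^3. if p dvd m then 0 else 1)"
    by (subst sum_distrib_left) (intro sum.cong, auto)
  also have "(\<Sum>m<p^3. if p dvd m then 0 else (1::real)) = real (p^(3-1)) * (real p - 1)"
    by (rule count_C[OF p]) simp
  finally have fin: "(\<Sum>c \<in> {c. 1 \<le> c \<and> c \<le> int (p^3) \<and> coprime c (int (p^3))}. (cmod (S (p^3) c)) ^ 6) = real p ^ 12 * (real (p^(3-1)) * (real p - 1))" by simp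
  show ?thesis unfolding T_alt fin using p0 by (simp add: field_simps flip: power_mult)
qed

lemma T_p2:
  assumes p: "prime p" "p \<noteq> 3"
  shows "T (p^2) = (real p - 1) / real p ^ 7"
proof -
  have p0: "p > 0" using p prime_gt_0_nat by simp
  have red: "\<not> int p dvd c \<Longrightarrow> (cmod (S (p^2) c)) ^ 6 = real p ^ 6" for c
    using S_p2[OF p] by simp
  have "(\<Sum>c \<in> {c. 1 \<le> c \<and> c \<le> int (p^2) \<and> coprime c (int (p^2))}. (cmod (S (p^2) c)) ^ 6)
      = (\<Sum>m<p^2. if p dvd m then 0 else (cmod (S (p^2) (int m))) ^ 6)"
    by (rule sum_C[OF p(1)]) simp
  also have "\<dots> = (\<Sum>m<p^2. if p dvd m then 0 else real p ^ 6 * 1)"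
    by (intro sum.cong) (auto simp: red)
  also have "\<dots> = real p ^ 6 * (\<Sum>m<p^2. if p dvd m then 0 else 1)"
    by (subst sum_distrib_left) (intro sum.cong, auto)
  also have "(\<Sum>m<p^2. if p dvd m then 0 else (1::real)) = real (p^(2-1)) * (real p - 1)"
    by (rule count_C[OF p(1)]) simp
  finally have fin: "(\<Sum>c \<in> {c. 1 \<le> c \<and> c \<le> int (p^2) \<and> coprime c (int (p^2))}. (cmod (S (p^2) c)) ^ 6) = real p ^ 6 * (real (p^(2-1)) * (real p - 1))" by simp
  show ?thesis unfolding T_alt fin using p0 by (simp add: field_simps flip: power_mult, simp only: mult.assoc flip: power_Suc, simp)
qed

lemma T_1: "T 1 = 1"
proof -
  have "{c::int. 1 \<le> c \<and> c \<le> int 1 \<and> coprime c (int 1)} = {1}" by auto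
  then show ?thesis unfolding T_alt by (simp add: S_one')
qed

lemma T_p:
  assumes p: "prime p"
  shows "T p = (\<Sum>c = 1..int p - 1. (cmod (S p c)) ^ 6) / real p ^ 7"
proof -
  have "{c. 1 \<le> c \<and> c \<le> int (p^1) \<and> coprime c (int (p^1))} = int ` {c \<in> {..<p^1}. \<not> p dvd c}"
    by (rule Cset[OF p]) simp
  also have "int ` {c \<in> {..<p^1}. \<not> p dvd c} = {1..int p - 1}"
  proof (intro set_eqI iffI)
    fix c assume "c \<in> int ` {c \<in> {..<p^1}. \<not> p dvd c}"
    then obtain m where m: "c = int m" "m < p" "\<not> p dvd m" by auto
    have "m \<noteq> 0" using m(3) by (rule contrapos_nn) simp
    then show "c \<in> {1..int p - 1}" using m by auto
  next
    fix c assume c: "c \<in> {1..int p - 1}"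
    then have "nat c < p" "\<not> p dvd nat c" "c = int (nat c)" by (auto dest: dvd_imp_le)
    then show "c \<in> int ` {c \<in> {..<p^1}. \<not> p dvd c}" by (intro image_eqI[of _ _ "nat c"]) auto
  qed
  finally show ?thesis unfolding T_alt by simp
qed

lemma T_3: "T 3 = 0"
proof -
  have "{c. 1 \<le> c \<and> c \<le> int (3^1) \<and> coprime c (int (3^1))} = int ` {c \<in> {..<3^1}. \<not> 3 dvd c}"
    by (rule Cset) simp_all
  then have "\<And>c. c \<in> {c. 1 \<le> c \<and> c \<le> int 3 \<and> coprime c (int 3)} \<Longrightarrow> S 3 c = 0"
    by (auto intro!: S_3)
  then show ?thesis unfolding T_alt by simp
qed

lemma T_9: "T 9 = (\<Sum>c \<in> {c::int. 1 \<le> c \<and> c \<le> 9 \<and> coprime c 3}. (cmod (S 9 c)) ^ 6) / 3 ^ 14"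
proof -
  have "coprime c (9::int) \<longleftrightarrow> coprime c 3" for c
  proof -
    have "coprime c (9::int) \<longleftrightarrow> coprime c (3^2)" by simp
    also have "\<dots> \<longleftrightarrow> coprime c 3" by (simp only: coprime_power_right_iff) simp
    finally show ?thesis .
  qed
  then have "{c. 1 \<le> c \<and> c \<le> int 9 \<and> coprime c (int 9)} = {c::int. 1 \<le> c \<and> c \<le> 9 \<and> coprime c 3}" by auto
  then show ?thesis unfolding T_alt by simp
qed


lemma sum_shift3: "(\<Sum>k<n+3. f k) = f 0 + f 1 + f 2 + (\<Sum>k<n. f (k+3))"
  for f :: "nat \<Rightarrow> 'a::comm_monoid_add"
  by (induction n) (simp_all add: numeral_3_eq_3 numeral_2_eq_2 add_ac)

lemma series3:
  fixes a :: "nat \<Rightarrow> complex" and r :: complex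
  assumes rec: "\<And>k. a (k+4) = r * a (k+1)" and r: "norm r < 1"
  shows "summable (\<lambda>k. norm (a k)) \<and> a sums ((a 0 + a 1 + a 2 + a 3 - r * a 0) / (1 - r))"
proof -
  define b where "b k = norm (a (Suc k))" for k
  have brec: "b (k+3) = norm r * b k" for k
  proof -
    have "Suc (k+3) = k + 4" by simp
    then show ?thesis unfolding b_def by (simp only: rec norm_mult Suc_eq_plus1)
  qed
  define B where "B = b 0 + b 1 + b 2"
  have b0: "b k \<ge> 0" for k unfolding b_def by simp
  have bnd: "(\<Sum>k<3*N. b k) \<le> B / (1 - norm r)" for N
  proof (induction N)
    case 0 then show ?case using r b0 unfolding B_def by simp
  next
    case (Suc N)
    have "3 * Suc N = 3*N+3" by simp
    then have "(\<Sum>k<3*Suc N. b k) = (\<Sum>k<3*N+3. b k)" by (simp only:)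
    also have "\<dots> = B + (\<Sum>k<3*N. b (k+3))" unfolding sum_shift3 B_def by simp
    also have "\<dots> = B + norm r * (\<Sum>k<3*N. b k)" by (simp add: brec sum_distrib_left)
    also have "\<dots> \<le> B + norm r * (B / (1 - norm r))"
      using Suc.IH by (intro add_left_mono mult_left_mono) auto
    also have "\<dots> = B / (1 - norm r)" using r by (simp add: field_simps)
    finally show ?case .
  qed
  have "summable b"
  proof (rule summableI_nonneg_bounded[where x="B / (1 - norm r)"])
    show "0 \<le> b n" for n by (rule b0)
    show "(\<Sum>i<n. b i) \<le> B / (1 - norm r)" for n
    proof -
      have "(\<Sum>i<n. b i) \<le> (\<Sum>i<3*n. b i)" by (rule sum_mono2) (auto simp: b0)
      then show ?thesis using bnd[of n] by linarith
    qed
  qed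
  then have sn: "summable (\<lambda>k. norm (a k))" unfolding b_def by (subst (asm) summable_Suc_iff)
  then have sa: "summable a" by (rule summable_norm_cancel)
  then have s1: "summable (\<lambda>n. a (n+1))" using summable_ignore_initial_segment by blast
  define A where "A = suminf a"
  have "A = (\<Sum>n. a (n + 4)) + (\<Sum>i<4. a i)" unfolding A_def by (rule suminf_split_initial_segment[OF sa])
  also have "(\<Sum>n. a (n + 4)) = (\<Sum>n. r * a (n + 1))" by (simp add: rec)
  also have "\<dots> = r * (\<Sum>n. a (n + 1))" by (rule suminf_mult[OF s1])
  also have "(\<Sum>n. a (n + 1)) = A - a 0"
    using suminf_split_initial_segment[OF sa, of 1] unfolding A_def by simp
  finally have "A = r * (A - a 0) + (a 0 + a 1 + a 2 + a 3)" by (simp add: numeral_eq_Suc add_ac)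
  moreover have "1 - r \<noteq> 0" using r by auto
  ultimately have "A = (a 0 + a 1 + a 2 + a 3 - r * a 0) / (1 - r)" by (simp add: field_simps)
  then have "a sums ((a 0 + a 1 + a 2 + a 3 - r * a 0) / (1 - r))"
    using summable_sums[OF sa] unfolding A_def by simp
  then show ?thesis using sn by simp
qed

lemma powr_nat_mult:
  fixes x :: complex
  assumes False: "x \<noteq> 0"
  shows "x powr (of_nat k * s) = (x powr s) ^ k"
proof -
  show ?thesis unfolding powr_def using exp_of_nat_mult[of k "s * ln x"] False by (simp add: mult_ac)
qed


lemma powr_lin:
  fixes x :: complex
  assumes "x \<noteq> 0"
  shows "x powr (of_nat k * s + of_nat m) = (x powr s) ^ k * x ^ m"
  using assms by (simp add: powr_add powr_nat_mult powr_nat')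

lemma main_gen:
  fixes s :: complex
  assumes p: "prime p" and s: "Re s > -2"
  defines "w \<equiv> (of_nat p :: complex) powr s"
  defines "r \<equiv> 1 / (of_nat p ^ 6 * w ^ 3)"
  shows "summable (\<lambda>k. norm (complex_of_real (T (p ^ k)) / (of_nat p) powr (of_nat k * s))) \<and>
         (\<lambda>k. complex_of_real (T (p ^ k)) / (of_nat p) powr (of_nat k * s)) sums
          ((1 + of_real (T p) / w + of_real (T (p^2)) / w^2 + of_real (T (p^3)) / w^3 - r) / (1 - r))"
proof -
  have p1: "p > 1" using p prime_gt_1_nat by blast
  have pc0: "(of_nat p :: complex) \<noteq> 0" using p1 by simp
  define a where "a k = complex_of_real (T (p ^ k)) / (of_nat p) powr (of_nat k * s)" for k
  have a_eq: "a k = complex_of_real (T (p ^ k)) / w ^ k" for k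
    unfolding a_def w_def by (simp add: powr_nat_mult[OF pc0])
  have w0: "w \<noteq> 0" unfolding w_def using pc0 by (simp add: powr_def)
  have rec: "a (k+4) = r * a (k+1)" for k
  proof -
    have "T (p^(k+4)) = T (p^(k+1)) / real p ^ 6" using T_rec[OF p, of "k+1"] by (simp add: add_ac)
    then have c: "complex_of_real (T (p^(k+4))) = complex_of_real (T (p^(k+1))) / of_nat p ^ 6"
      by simp
    have "k + 4 = (k+1) + 3" by simp
    then have e4: "w ^ (k+4) = w^(k+1) * w^3" by (simp only: power_add)
    show ?thesis unfolding a_eq r_def c e4 using w0 pc0
      by (simp add: field_simps)
  qed
  have nw: "norm w = real p powr Re s" unfolding w_def by (subst norm_powr_real_powr) auto
  have nr: "norm r < 1"
  proof -
    have "real p powr 0 < real p powr (2 + Re s)" using p1 s by (intro powr_less_mono) auto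
    then have gt: "1 < real p ^ 2 * real p powr Re s"
      using p1 by (simp add: powr_add powr_realpow)
    then have "1 < (real p ^ 2 * real p powr Re s) ^ 3" by (intro one_less_power) auto
    then have "1 < real p ^ 6 * norm w ^ 3" unfolding nw by (simp add: power_mult_distrib flip: power_mult)
    then show ?thesis unfolding r_def by (simp add: norm_divide norm_mult norm_power)
  qed
  have main: "summable (\<lambda>k. norm (a k)) \<and> a sums ((a 0 + a 1 + a 2 + a 3 - r * a 0) / (1 - r))"
    by (rule series3[OF rec nr])
  have "T (Suc 0) = 1" using T_1 by simp
  then have "a 0 = 1" unfolding a_eq by simp
  moreover have "a 1 = of_real (T p) / w" "a 2 = of_real (T (p^2)) / w^2" "a 3 = of_real (T (p^3)) / w^3"
    unfolding a_eq by simp_all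
  ultimately have fin: "summable (\<lambda>k. norm (a k)) \<and> a sums ((1 + of_real (T p) / w + of_real (T (p^2)) / w^2 + of_real (T (p^3)) / w^3 - r) / (1 - r))"
    using main by simp
  show ?thesis using fin unfolding a_def[abs_def] .
qed


lemma alg1:
  fixes w P X :: complex
  assumes "w \<noteq> 0" "P \<noteq> 0"
  shows "(1 + X / P^7 / w + (P-1)/P^7/w^2 + (P-1)/P^7/w^3 - 1/(P^6 * w^3)) / (1 - 1/(P^6 * w^3)) =
     1 / (1 - 1 / (w^3 * P^6)) * (1 + 1 / (w * P^7) * X + (P - 1) / (w^2 * P^7) - 1 / (w^3 * P^7))"
proof -
  have "1 + X / P^7 / w + (P-1)/P^7/w^2 + (P-1)/P^7/w^3 - 1/(P^6 * w^3) =
        1 + 1 / (w * P^7) * X + (P - 1) / (w^2 * P^7) - 1 / (w^3 * P^7)"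
    using assms by (simp add: field_simps) algebra
  then show ?thesis by (simp add: mult.commute)
qed

lemma alg3:
  fixes w X :: complex
  assumes "w \<noteq> 0"
  shows "(1 + 0 / w + X / 3^14 / w^2 + 2/3^7/w^3 - 1/(3^6 * w^3)) / (1 - 1/(3^6 * w^3)) =
     1 / (1 - 1 / (w^3 * 3^6)) * (1 + 1 / (w^2 * 3^14) * X - 1 / (w^3 * 3^7))"
proof -
  have "1 + 0 / w + X / 3^14 / w^2 + 2/3^7/w^3 - 1/(3^6 * w^3) =
        1 + 1 / (w^2 * 3^14) * X - 1 / (w^3 * 3^7)"
    using assms by (simp add: field_simps)
  then show ?thesis by (simp add: mult.commute)
qed

theorem lemma7:
  fixes s :: complex
  assumes "Re s > -2"
  shows "(\<forall>p::nat. prime p \<and> p \<noteq> 3 \<longrightarrow>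
            summable (\<lambda>k. norm (complex_of_real (T (p ^ k)) / (of_nat p) powr (of_nat k * s))) \<and>
            (\<lambda>k. complex_of_real (T (p ^ k)) / (of_nat p) powr (of_nat k * s)) sums
              (1 / (1 - 1 / (of_nat p) powr (3 * s + 6)) *
                (1 + 1 / (of_nat p) powr (s + 7) *
                       (\<Sum>c = 1..int p - 1. complex_of_real ((cmod (S p c)) ^ 6))
                   + (of_nat p - 1) / (of_nat p) powr (2 * s + 7)
                   - 1 / (of_nat p) powr (3 * s + 7))))
         \<and>
         (summable (\<lambda>k. norm (complex_of_real (T (3 ^ k)) / (3::complex) powr (of_nat k * s))) \<and>
          (\<lambda>k. complex_of_real (T (3 ^ k)) / (3::complex) powr (of_nat k * s)) sums
            (1 / (1 - 1 / (3::complex) powr (3 * s + 6)) *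
              (1 + 1 / (3::complex) powr (2 * s + 14) *
                     (\<Sum>c \<in> {c::int. 1 \<le> c \<and> c \<le> 9 \<and> coprime c 3}. complex_of_real ((cmod (S 9 c)) ^ 6))
                 - 1 / (3::complex) powr (3 * s + 7))))"
proof (rule conjI)
 show "\<forall>p::nat. prime p \<and> p \<noteq> 3 \<longrightarrow>
            summable (\<lambda>k. norm (complex_of_real (T (p ^ k)) / (of_nat p) powr (of_nat k * s))) \<and>
            (\<lambda>k. complex_of_real (T (p ^ k)) / (of_nat p) powr (of_nat k * s)) sums
              (1 / (1 - 1 / (of_nat p) powr (3 * s + 6)) *
                (1 + 1 / (of_nat p) powr (s + 7) *
                       (\<Sum>c = 1..int p - 1. complex_of_real ((cmod (S p c)) ^ 6))
                   + (of_nat p - 1) / (of_nat p) powr (2 * s + 7)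
                   - 1 / (of_nat p) powr (3 * s + 7)))"
 proof (intro allI impI)
  fix p :: nat assume pp: "prime p \<and> p \<noteq> 3"
  then have p: "prime p" "p \<noteq> 3" by auto
  define w where "w = (of_nat p :: complex) powr s"
  have pc0: "(of_nat p :: complex) \<noteq> 0" using p prime_gt_0_nat by simp
  have w0: "w \<noteq> 0" unfolding w_def using pc0 by (simp add: powr_def)
  note G = main_gen[OF p(1) assms, folded w_def]
  have e1: "(of_nat p :: complex) powr (3 * s + 6) = w^3 * of_nat p ^ 6"
    using powr_lin[OF pc0, of 3 s 6] unfolding w_def by simp
  have e2: "(of_nat p :: complex) powr (s + 7) = w * of_nat p ^ 7"
    using powr_lin[OF pc0, of 1 s 7] unfolding w_def by simp
  have e3: "(of_nat p :: complex) powr (2 * s + 7) = w^2 * of_nat p ^ 7"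
    using powr_lin[OF pc0, of 2 s 7] unfolding w_def by simp
  have e4: "(of_nat p :: complex) powr (3 * s + 7) = w^3 * of_nat p ^ 7"
    using powr_lin[OF pc0, of 3 s 7] unfolding w_def by simp
  define X where "X = (\<Sum>c = 1..int p - 1. complex_of_real ((cmod (S p c)) ^ 6))"
  have Tp: "complex_of_real (T p) = X / of_nat p ^ 7"
    unfolding T_p[OF p(1)] X_def by (simp add: of_real_sum)
  have Tp2: "complex_of_real (T (p^2)) = (of_nat p - 1) / of_nat p ^ 7"
    unfolding T_p2[OF p] by simp
  have Tp3: "complex_of_real (T (p^3)) = (of_nat p - 1) / of_nat p ^ 7"
    unfolding T_p3[OF p(1)] by simp
  have V: "(1 + of_real (T p) / w + of_real (T (p^2)) / w^2 + of_real (T (p^3)) / w^3 - 1 / (of_nat p ^ 6 * w ^ 3)) / (1 - 1 / (of_nat p ^ 6 * w ^ 3))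
     = 1 / (1 - 1 / (of_nat p) powr (3 * s + 6)) *
                (1 + 1 / (of_nat p) powr (s + 7) * X
                   + (of_nat p - 1) / (of_nat p) powr (2 * s + 7)
                   - 1 / (of_nat p) powr (3 * s + 7))"
    unfolding Tp Tp2 Tp3 e1 e2 e3 e4 by (rule alg1[OF w0 pc0])
  show "summable (\<lambda>k. norm (complex_of_real (T (p ^ k)) / (of_nat p) powr (of_nat k * s))) \<and>
            (\<lambda>k. complex_of_real (T (p ^ k)) / (of_nat p) powr (of_nat k * s)) sums
              (1 / (1 - 1 / (of_nat p) powr (3 * s + 6)) *
                (1 + 1 / (of_nat p) powr (s + 7) *
                       (\<Sum>c = 1..int p - 1. complex_of_real ((cmod (S p c)) ^ 6))
                   + (of_nat p - 1) / (of_nat p) powr (2 * s + 7)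
                   - 1 / (of_nat p) powr (3 * s + 7)))"
    using G unfolding V X_def .
 qed
next
  have p: "prime (3::nat)" by simp
  have c3: "(of_nat 3 :: complex) = 3" by simp
  define w where "w = (3 :: complex) powr s"
  have pc0: "(3 :: complex) \<noteq> 0" by simp
  have w0: "w \<noteq> 0" unfolding w_def using pc0 by (simp add: powr_def)
  note G = main_gen[OF p assms, unfolded c3, folded w_def]
  have e1: "(3 :: complex) powr (3 * s + 6) = w^3 * 3 ^ 6"
    using powr_lin[OF pc0, of 3 s 6] unfolding w_def by simp
  have e3: "(3 :: complex) powr (2 * s + 14) = w^2 * 3 ^ 14"
    using powr_lin[OF pc0, of 2 s 14] unfolding w_def by simp
  have e4: "(3 :: complex) powr (3 * s + 7) = w^3 * 3 ^ 7"
    using powr_lin[OF pc0, of 3 s 7] unfolding w_def by simp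
  define X where "X = (\<Sum>c \<in> {c::int. 1 \<le> c \<and> c \<le> 9 \<and> coprime c 3}. complex_of_real ((cmod (S 9 c)) ^ 6))"
  have T1: "complex_of_real (T 3) = 0" by (simp add: T_3)
  have "complex_of_real (T (3^2)) = complex_of_real ((\<Sum>c \<in> {c::int. 1 \<le> c \<and> c \<le> 9 \<and> coprime c 3}. (cmod (S 9 c)) ^ 6) / 3 ^ 14)"
  proof -
    have n9: "(3::nat)^2 = 9" by simp
    show ?thesis unfolding n9 T_9 ..
  qed
  also have "\<dots> = X / 3 ^ 14" unfolding X_def
    by (simp only: of_real_divide of_real_sum of_real_power of_real_numeral)
  finally have T2: "complex_of_real (T (3^2)) = X / 3 ^ 14" .
  have r3: "T (3^3) = 2 / 3 ^ 7"
    using T_p3[OF p] by simp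
  have T3: "complex_of_real (T (3^3)) = 2 / 3 ^ 7"
    unfolding r3 by simp
  have V: "(1 + of_real (T 3) / w + of_real (T (3^2)) / w^2 + of_real (T (3^3)) / w^3 - 1 / (3 ^ 6 * w ^ 3)) / (1 - 1 / (3 ^ 6 * w ^ 3))
     = 1 / (1 - 1 / (3::complex) powr (3 * s + 6)) *
              (1 + 1 / (3::complex) powr (2 * s + 14) * X
                 - 1 / (3::complex) powr (3 * s + 7))"
    unfolding T1 T2 T3 e1 e3 e4 by (rule alg3[OF w0])
  show "summable (\<lambda>k. norm (complex_of_real (T (3 ^ k)) / (3::complex) powr (of_nat k * s))) \<and>
          (\<lambda>k. complex_of_real (T (3 ^ k)) / (3::complex) powr (of_nat k * s)) sums
            (1 / (1 - 1 / (3::complex) powr (3 * s + 6)) *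
              (1 + 1 / (3::complex) powr (2 * s + 14) *
                     (\<Sum>c \<in> {c::int. 1 \<le> c \<and> c \<le> 9 \<and> coprime c 3}. complex_of_real ((cmod (S 9 c)) ^ 6))
                 - 1 / (3::complex) powr (3 * s + 7)))"
    using G unfolding V X_def .
qed

end
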